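(* For $1\le i\le k$ let $G_i$ be an $r_i$-regular graph with $n_i\ge 2$ vertices and let $A_i$ be an Abelian group of order $n_i$; put $r=\sum_{i=1}^k r_i$. Suppose $\{1,\ldots,k\}$ is partitioned into three (possibly empty) sets $I,J,L$ such that: (a) for each $i\in I$, $G_i$ is $A_i$-distance magic and $\gcd(r-r_i,n_i)=1$; (b) for each $j\in J$, $G_j$ is $A_j$-distance antimagic and $\exp(A_j)$ divides $r-r_j$; (c) for each $l\in L$, $G_l$ admits an $A_l$-balanced labelling and $\gcd(r,n_l)=1$. Then $G_1\Box\cdots\Box G_k$ is $A_1\times\cdots\times A_k$-distance antimagic.
   Context: The Cartesian product $G_1\Box\cdots\Box G_k$ has vertex set $V(G_1)\times\cdots\times V(G_k)$, with $(x_1,\ldots,x_k)$ and $(y_1,\ldots,y_k)$ adjacent iff they differ in exactly one coordinate $i$ and $x_iy_i\in E(G_i)$. $\exp(A)$ is the least positive integer $m$ with $mx=0$ for all $x\in A$. For a graph $G$ with $n$ vertices and an Abelian group $A$ of order $n$ (written additively), and a bijection $f:V(G)\to A$, the weight of $x$ is $w_f(x)=\sum_{y\in N(x)} f(y)$ computed in $A$ ($N(x)$ the open neighbourhood). $f$ is an $A$-distance antimagic labelling if all weights are pairwise distinct, and an $A$-distance magic labelling if all weights are equal. $G$ is $A$-distance antimagic (resp. magic) if it admits such a labelling. If $G$ is $r$-regular, a bijection $f:V(G)\to A$ is an $A$-balanced labelling if $w_f(x)=r f(x)$ for every $x\in V(G)$. *)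

theory Defs
  imports "HOL-Algebra.Algebra"
begin

definition simple_graph :: "'a set \<Rightarrow> ('a \<Rightarrow> 'a \<Rightarrow> bool) \<Rightarrow> bool" where
  "simple_graph V E \<longleftrightarrow> finite V \<and>
     (\<forall>x y. E x y \<longrightarrow> x \<in> V \<and> y \<in> V \<and> x \<noteq> y \<and> E y x)"

definition nbhd :: "'a set \<Rightarrow> ('a \<Rightarrow> 'a \<Rightarrow> bool) \<Rightarrow> 'a \<Rightarrow> 'a set" where
  "nbhd V E x = {y \<in> V. E x y}"

definition regular :: "'a set \<Rightarrow> ('a \<Rightarrow> 'a \<Rightarrow> bool) \<Rightarrow> nat \<Rightarrow> bool" where
  "regular V E r \<longleftrightarrow> (\<forall>x\<in>V. card (nbhd V E x) = r)"

text \<open>Weight of x under labelling f with values in the (commutative) group A;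
the group operation of A plays the role of the additive operation.\<close>
definition weight :: "('g, 'c) monoid_scheme \<Rightarrow> 'a set \<Rightarrow> ('a \<Rightarrow> 'a \<Rightarrow> bool) \<Rightarrow> ('a \<Rightarrow> 'g) \<Rightarrow> 'a \<Rightarrow> 'g" where
  "weight A V E f x = finprod A f (nbhd V E x)"

definition distance_antimagic_labelling ::
  "('g, 'c) monoid_scheme \<Rightarrow> 'a set \<Rightarrow> ('a \<Rightarrow> 'a \<Rightarrow> bool) \<Rightarrow> ('a \<Rightarrow> 'g) \<Rightarrow> bool" where
  "distance_antimagic_labelling A V E f \<longleftrightarrow>
     bij_betw f V (carrier A) \<and> inj_on (weight A V E f) V"

definition distance_magic_labelling ::
  "('g, 'c) monoid_scheme \<Rightarrow> 'a set \<Rightarrow> ('a \<Rightarrow> 'a \<Rightarrow> bool) \<Rightarrow> ('a \<Rightarrow> 'g) \<Rightarrow> bool" where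
  "distance_magic_labelling A V E f \<longleftrightarrow>
     bij_betw f V (carrier A) \<and> (\<forall>x\<in>V. \<forall>y\<in>V. weight A V E f x = weight A V E f y)"

definition distance_antimagic :: "('g, 'c) monoid_scheme \<Rightarrow> 'a set \<Rightarrow> ('a \<Rightarrow> 'a \<Rightarrow> bool) \<Rightarrow> bool" where
  "distance_antimagic A V E \<longleftrightarrow> (\<exists>f. distance_antimagic_labelling A V E f)"

definition distance_magic :: "('g, 'c) monoid_scheme \<Rightarrow> 'a set \<Rightarrow> ('a \<Rightarrow> 'a \<Rightarrow> bool) \<Rightarrow> bool" where
  "distance_magic A V E \<longleftrightarrow> (\<exists>f. distance_magic_labelling A V E f)"

definition balanced_labelling ::
  "('g, 'c) monoid_scheme \<Rightarrow> 'a set \<Rightarrow> ('a \<Rightarrow> 'a \<Rightarrow> bool) \<Rightarrow> nat \<Rightarrow> ('a \<Rightarrow> 'g) \<Rightarrow> bool" where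
  "balanced_labelling A V E r f \<longleftrightarrow>
     bij_betw f V (carrier A) \<and> (\<forall>x\<in>V. weight A V E f x = f x [^]\<^bsub>A\<^esub> r)"

definition group_exponent :: "('g, 'c) monoid_scheme \<Rightarrow> nat" where
  "group_exponent A = (LEAST m. 0 < m \<and> (\<forall>x\<in>carrier A. x [^]\<^bsub>A\<^esub> m = \<one>\<^bsub>A\<^esub>))"

definition cart_V :: "'i set \<Rightarrow> ('i \<Rightarrow> 'a set) \<Rightarrow> ('i \<Rightarrow> 'a) set" where
  "cart_V K V = PiE K V"

definition cart_E :: "'i set \<Rightarrow> ('i \<Rightarrow> 'a \<Rightarrow> 'a \<Rightarrow> bool) \<Rightarrow> ('i \<Rightarrow> 'a) \<Rightarrow> ('i \<Rightarrow> 'a) \<Rightarrow> bool" where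
  "cart_E K E x y \<longleftrightarrow>
     (\<exists>i\<in>K. E i (x i) (y i) \<and> (\<forall>j. j \<noteq> i \<longrightarrow> x j = y j))"

end

theory Submission
  imports Defs "HOL-Number_Theory.Cong"
begin

lemma pg_comm_group:
  assumes "\<And>i. i \<in> K \<Longrightarrow> comm_group (G i)"
  shows "comm_group (product_group K G)"
proof (rule group.group_comm_groupI)
  show "group (product_group K G)"
    using assms by (simp add: comm_group.axioms(2))
  fix x y assume "x \<in> carrier (product_group K G)" "y \<in> carrier (product_group K G)"
  then show "x \<otimes>\<^bsub>product_group K G\<^esub> y = y \<otimes>\<^bsub>product_group K G\<^esub> x"
    using assms by (auto simp: PiE_iff intro!: restrict_ext comm_monoid.m_comm[OF comm_group.axioms(1)])
qed

lemma finprod_pg: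
  assumes cg: "\<And>i. i \<in> K \<Longrightarrow> comm_group (G i)" and fin: "finite S"
    and F: "F \<in> S \<rightarrow> carrier (product_group K G)" and j: "j \<in> K"
  shows "finprod (product_group K G) F S j = finprod (G j) (\<lambda>s. F s j) S"
  using fin F
proof (induction S rule: finite_induct)
  case empty
  have "comm_group (product_group K G)" using pg_comm_group cg by blast
  then show ?case using j cg by (simp add: comm_group.axioms(1) comm_monoid.finprod_empty)
next
  case (insert a S)
  have P: "comm_group (product_group K G)" using pg_comm_group cg by blast
  have Gj: "comm_group (G j)" using cg j by blast
  have "finprod (product_group K G) F (insert a S) = F a \<otimes>\<^bsub>product_group K G\<^esub> finprod (product_group K G) F S"
    using insert by (intro comm_monoid.finprod_insert[OF comm_group.axioms(1)[OF P]]) auto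
  moreover have "finprod (G j) (\<lambda>s. F s j) (insert a S) = F a j \<otimes>\<^bsub>G j\<^esub> finprod (G j) (\<lambda>s. F s j) S"
    using insert j by (intro comm_monoid.finprod_insert[OF comm_group.axioms(1)[OF Gj]]) (auto simp: PiE_iff Pi_iff)
  ultimately show ?case using insert j by simp
qed

lemma pow_inj_coprime:
  assumes G: "group G" and n: "order G \<ge> 2" and cp: "coprime m (order G)"
    and a: "a \<in> carrier G" and b: "b \<in> carrier G" and eq: "a [^]\<^bsub>G\<^esub> m = b [^]\<^bsub>G\<^esub> m"
  shows "a = b"
proof -
  obtain u where u: "[m * u = Suc 0] (mod order G)" using cong_solve_coprime_nat[OF cp] by blast
  have mod1: "m * u mod order G = 1" using u n by (simp add: cong_def)
  have red: "x [^]\<^bsub>G\<^esub> (m*u) = x" if x: "x \<in> carrier G" for x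
  proof -
    have "x [^]\<^bsub>G\<^esub> (m*u) = x [^]\<^bsub>G\<^esub> (order G * (m*u div order G) + m*u mod order G)"
      by simp
    also have "\<dots> = (x [^]\<^bsub>G\<^esub> order G) [^]\<^bsub>G\<^esub> (m*u div order G) \<otimes>\<^bsub>G\<^esub> x [^]\<^bsub>G\<^esub> (m*u mod order G)"
      using x G by (simp add: group.is_monoid monoid.nat_pow_mult monoid.nat_pow_pow)
    also have "\<dots> = x" using x G mod1 by (simp add: group.pow_order_eq_1 group.is_monoid monoid.nat_pow_one)
    finally show ?thesis .
  qed
  have "a = (a [^]\<^bsub>G\<^esub> m) [^]\<^bsub>G\<^esub> u" using red[OF a] a G by (simp add: group.is_monoid monoid.nat_pow_pow)
  also have "\<dots> = (b [^]\<^bsub>G\<^esub> m) [^]\<^bsub>G\<^esub> u" using eq by simp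
  also have "\<dots> = b" using red[OF b] b G by (simp add: group.is_monoid monoid.nat_pow_pow)
  finally show ?thesis .
qed

lemma finprod_pow_sum:
  assumes G: "comm_monoid G" and a: "a \<in> carrier G"
  shows "finprod G (\<lambda>i. a [^]\<^bsub>G\<^esub> (g i :: nat)) S = a [^]\<^bsub>G\<^esub> sum g S"
proof (induction S rule: infinite_finite_induct)
  case (infinite S) then show ?case using G by (simp add: comm_monoid.finprod_infinite)
next
  case empty then show ?case using G by (simp add: comm_monoid.finprod_empty)
next
  case (insert x S)
  have "finprod G (\<lambda>i. a [^]\<^bsub>G\<^esub> g i) (insert x S) = a [^]\<^bsub>G\<^esub> g x \<otimes>\<^bsub>G\<^esub> finprod G (\<lambda>i. a [^]\<^bsub>G\<^esub> g i) S"
    using insert a G by (intro comm_monoid.finprod_insert) (auto simp: Pi_iff comm_monoid.axioms(1) monoid.nat_pow_closed)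
  then show ?case using insert a G by (simp add: comm_monoid.axioms(1) monoid.nat_pow_mult)
qed

lemma nbhd_cart:
  assumes sg: "\<And>i. i \<in> K \<Longrightarrow> simple_graph (V i) (E i)" and x: "x \<in> PiE K V"
  shows "nbhd (cart_V K V) (cart_E K E) x = (\<Union>i\<in>K. (\<lambda>v. x(i := v)) ` nbhd (V i) (E i) (x i))"
proof (intro Set.set_eqI iffI)
  fix y assume "y \<in> nbhd (cart_V K V) (cart_E K E) x"
  then have y: "y \<in> PiE K V" and e: "cart_E K E x y" by (auto simp: nbhd_def cart_V_def)
  then obtain i where i: "i \<in> K" "E i (x i) (y i)" "\<And>j. j \<noteq> i \<Longrightarrow> x j = y j"
    by (auto simp: cart_E_def)
  have "y = x(i := y i)" using i by (auto intro!: ext)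
  moreover have "y i \<in> nbhd (V i) (E i) (x i)" using i y by (auto simp: nbhd_def)
  ultimately show "y \<in> (\<Union>i\<in>K. (\<lambda>v. x(i := v)) ` nbhd (V i) (E i) (x i))" using i by blast
next
  fix y assume "y \<in> (\<Union>i\<in>K. (\<lambda>v. x(i := v)) ` nbhd (V i) (E i) (x i))"
  then obtain i v where i: "i \<in> K" and v: "v \<in> V i" "E i (x i) v" and y: "y = x(i := v)"
    by (auto simp: nbhd_def)
  have "y \<in> PiE K V" using x v i y by (auto simp: PiE_iff extensional_def)
  moreover have "cart_E K E x y" using i v y by (auto simp: cart_E_def)
  ultimately show "y \<in> nbhd (cart_V K V) (cart_E K E) x" by (simp add: nbhd_def cart_V_def)
qed

lemma weight_cart:
  assumes finK: "finite K" and j: "j \<in> K"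
    and sg: "\<And>i. i \<in> K \<Longrightarrow> simple_graph (V i) (E i)"
    and reg: "\<And>i. i \<in> K \<Longrightarrow> regular (V i) (E i) (rr i)"
    and cg: "\<And>i. i \<in> K \<Longrightarrow> comm_group (A i)"
    and bj: "\<And>i. i \<in> K \<Longrightarrow> bij_betw (fl i) (V i) (carrier (A i))"
    and x: "x \<in> PiE K V"
  shows "weight (product_group K A) (cart_V K V) (cart_E K E) (\<lambda>y. \<lambda>i\<in>K. fl i (y i)) x j
       = weight (A j) (V j) (E j) (fl j) (x j) \<otimes>\<^bsub>A j\<^esub> fl j (x j) [^]\<^bsub>A j\<^esub> (sum rr K - rr j)"
proof -
  let ?F = "\<lambda>y. \<lambda>i\<in>K. fl i (y i)"
  let ?N = "nbhd (cart_V K V) (cart_E K E) x"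
  let ?Ni = "\<lambda>i. nbhd (V i) (E i) (x i)"
  have Aj: "comm_group (A j)" using cg j by blast
  have Am: "comm_monoid (A j)" using Aj comm_group.axioms(1) by blast
  have Mj: "monoid (A j)" using Am comm_monoid.axioms(1) by blast
  have finV: "finite (V i)" if "i \<in> K" for i using sg[OF that] by (simp add: simple_graph_def)
  have finN: "finite ?N"
  proof (rule finite_subset)
    show "?N \<subseteq> PiE K V" by (auto simp: nbhd_def cart_V_def)
    show "finite (PiE K V)" using finK finV by (simp add: finite_PiE)
  qed
  have NsubV: "?N \<subseteq> PiE K V" by (auto simp: nbhd_def cart_V_def)
  have Fc: "?F \<in> PiE K V \<rightarrow> carrier (product_group K A)"
    using bj by (fastforce simp: PiE_iff bij_betw_def)
  have xj: "x j \<in> V j" using x j by (auto simp: PiE_iff)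
  have fxj: "fl j (x j) \<in> carrier (A j)" using bj[OF j] xj by (auto simp: bij_betw_def)
  have flc: "fl j v \<in> carrier (A j)" if "v \<in> V j" for v using bj[OF j] that by (auto simp: bij_betw_def)
  have yjc: "fl j (y j) \<in> carrier (A j)" if "y \<in> PiE K V" for y using flc that j by (auto simp: PiE_iff)
  have "weight (product_group K A) (cart_V K V) (cart_E K E) ?F x j = finprod (product_group K A) ?F ?N j"
    by (simp add: weight_def)
  also have "\<dots> = finprod (A j) (\<lambda>y. ?F y j) ?N"
    using Fc NsubV by (intro finprod_pg[OF cg finN _ j]) auto
  also have "\<dots> = finprod (A j) (\<lambda>y. fl j (y j)) ?N"
    using j yjc NsubV by (intro comm_monoid.finprod_cong'[OF Am]) (auto simp: Pi_iff)
  also have "\<dots> = finprod (A j) (\<lambda>y. fl j (y j)) (\<Union>i\<in>K. (\<lambda>v. x(i := v)) ` ?Ni i)"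
    using nbhd_cart[OF sg x] by simp
  also have "\<dots> = finprod (A j) (\<lambda>i. finprod (A j) (\<lambda>y. fl j (y j)) ((\<lambda>v. x(i := v)) ` ?Ni i)) K"
  proof (rule comm_monoid.finprod_UN_disjoint[OF Am finK])
    show "finite ((\<lambda>v. x(i := v)) ` ?Ni i)" if "i \<in> K" for i
      using finV[OF that] by (simp add: nbhd_def)
    show "pairwise (\<lambda>i i'. disjnt ((\<lambda>v. x(i := v)) ` ?Ni i) ((\<lambda>v. x(i' := v)) ` ?Ni i')) K"
    proof (clarsimp simp: pairwise_def disjnt_def)
      fix i i' assume "i \<in> K" "i' \<in> K" "i \<noteq> i'"
      show "(\<lambda>v. x(i := v)) ` ?Ni i \<inter> (\<lambda>v. x(i' := v)) ` ?Ni i' = {}"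
      proof (rule ccontr)
        assume "\<not> ?thesis"
        then obtain v v' where v: "v \<in> ?Ni i" "v' \<in> ?Ni i'" "x(i := v) = x(i' := v')" by blast
        then have "v = x i" using \<open>i \<noteq> i'\<close> by (metis fun_upd_same fun_upd_other)
        then show False using v(1) sg[OF \<open>i \<in> K\<close>] by (auto simp: nbhd_def simple_graph_def)
      qed
    qed
    show "fl j (y j) \<in> carrier (A j)" if "i \<in> K" "y \<in> (\<lambda>v. x(i := v)) ` ?Ni i" for i y
    proof -
      have "y \<in> ?N" using that nbhd_cart[OF sg x] by blast
      then show ?thesis using NsubV yjc by blast
    qed
  qed
  also have "\<dots> = finprod (A j) (\<lambda>i. if i = j then weight (A j) (V j) (E j) (fl j) (x j)
                                     else fl j (x j) [^]\<^bsub>A j\<^esub> rr i) K"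
  proof (rule comm_monoid.finprod_cong'[OF Am refl])
    show "(\<lambda>i. if i = j then weight (A j) (V j) (E j) (fl j) (x j) else fl j (x j) [^]\<^bsub>A j\<^esub> rr i) \<in> K \<rightarrow> carrier (A j)"
      using fxj flc Mj by (auto simp: weight_def nbhd_def monoid.nat_pow_closed intro!: comm_monoid.finprod_closed[OF Am])
    fix i assume i: "i \<in> K"
    have inj: "inj_on (\<lambda>v. x(i := v)) (?Ni i)" by (auto simp: inj_on_def dest: fun_cong[where x = i])
    have "finprod (A j) (\<lambda>y. fl j (y j)) ((\<lambda>v. x(i := v)) ` ?Ni i)
        = finprod (A j) (\<lambda>v. fl j ((x(i := v)) j)) (?Ni i)"
      using i flc xj by (intro comm_monoid.finprod_reindex[OF Am _ inj]) (auto simp: nbhd_def Pi_iff)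
    also have "\<dots> = (if i = j then weight (A j) (V j) (E j) (fl j) (x j) else fl j (x j) [^]\<^bsub>A j\<^esub> rr i)"
    proof (cases "i = j")
      case True then show ?thesis by (simp add: weight_def)
    next
      case False
      then have "finprod (A j) (\<lambda>v. fl j ((x(i := v)) j)) (?Ni i) = finprod (A j) (\<lambda>v. fl j (x j)) (?Ni i)"
        by simp
      also have "\<dots> = fl j (x j) [^]\<^bsub>A j\<^esub> card (?Ni i)" using comm_monoid.finprod_const[OF Am fxj] .
      also have "card (?Ni i) = rr i" using reg[OF i] x i by (auto simp: regular_def PiE_iff)
      finally show ?thesis using False by simp
    qed
    finally show "finprod (A j) (\<lambda>y. fl j (y j)) ((\<lambda>v. x(i := v)) ` ?Ni i) = (if i = j then weight (A j) (V j) (E j) (fl j) (x j) else fl j (x j) [^]\<^bsub>A j\<^esub> rr i)" .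
  qed
  also have "\<dots> = weight (A j) (V j) (E j) (fl j) (x j) \<otimes>\<^bsub>A j\<^esub>
       finprod (A j) (\<lambda>i. if i = j then weight (A j) (V j) (E j) (fl j) (x j)
                                     else fl j (x j) [^]\<^bsub>A j\<^esub> rr i) (K - {j})"
  proof -
    have "K = insert j (K - {j})" using j by blast
    then show ?thesis
      using fxj flc Mj finK
      by (subst (1) \<open>K = insert j (K - {j})\<close>, subst comm_monoid.finprod_insert[OF Am])
         (auto simp: weight_def nbhd_def monoid.nat_pow_closed Pi_iff intro!: comm_monoid.finprod_closed[OF Am])
  qed
  also have "finprod (A j) (\<lambda>i. if i = j then weight (A j) (V j) (E j) (fl j) (x j)
                                     else fl j (x j) [^]\<^bsub>A j\<^esub> rr i) (K - {j})
           = finprod (A j) (\<lambda>i. fl j (x j) [^]\<^bsub>A j\<^esub> rr i) (K - {j})"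
    using fxj Mj by (intro comm_monoid.finprod_cong'[OF Am refl]) (auto simp: monoid.nat_pow_closed)
  also have "\<dots> = fl j (x j) [^]\<^bsub>A j\<^esub> sum rr (K - {j})"
    using finprod_pow_sum[OF Am fxj] .
  also have "sum rr (K - {j}) = sum rr K - rr j"
    using finK j by (simp add: sum_diff1_nat)
  finally show ?thesis .
qed


lemma weight_closed:
  assumes "comm_group A" "bij_betw f V (carrier A)" "v \<in> V"
  shows "weight A V E f v \<in> carrier A"
proof -
  have "f \<in> nbhd V E v \<rightarrow> carrier A"
    using bij_betw_imp_funcset[OF assms(2)] by (auto simp: nbhd_def Pi_iff)
  then show ?thesis unfolding weight_def
    by (rule comm_monoid.finprod_closed[OF comm_group.axioms(1)[OF assms(1)]])
qed

lemma good_I: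
  assumes cg: "comm_group A" and dm: "distance_magic A V E" and cp: "coprime m (order A)"
    and o2: "order A \<ge> 2"
  shows "\<exists>f. bij_betw f V (carrier A) \<and> inj_on (\<lambda>v. weight A V E f v \<otimes>\<^bsub>A\<^esub> f v [^]\<^bsub>A\<^esub> m) V"
proof -
  obtain f where f: "distance_magic_labelling A V E f" using dm unfolding distance_magic_def by (erule exE)
  have bj: "bij_betw f V (carrier A)"
    using f unfolding distance_magic_labelling_def by (rule conjunct1)
  have eqw0: "\<forall>x\<in>V. \<forall>y\<in>V. weight A V E f x = weight A V E f y"
    using f unfolding distance_magic_labelling_def by (rule conjunct2)
  have eqw: "\<And>x y. x \<in> V \<Longrightarrow> y \<in> V \<Longrightarrow> weight A V E f x = weight A V E f y"
    using eqw0 by blast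
  have G: "group A" using cg by (rule comm_group.axioms(2))
  have fc: "\<And>v. v \<in> V \<Longrightarrow> f v \<in> carrier A" using bj by (rule bij_betw_apply)
  have "inj_on (\<lambda>v. weight A V E f v \<otimes>\<^bsub>A\<^esub> f v [^]\<^bsub>A\<^esub> m) V"
  proof (rule inj_onI)
    fix x y assume x: "x \<in> V" and y: "y \<in> V"
      and e: "weight A V E f x \<otimes>\<^bsub>A\<^esub> f x [^]\<^bsub>A\<^esub> m = weight A V E f y \<otimes>\<^bsub>A\<^esub> f y [^]\<^bsub>A\<^esub> m"
    have e2: "weight A V E f x \<otimes>\<^bsub>A\<^esub> f x [^]\<^bsub>A\<^esub> m = weight A V E f x \<otimes>\<^bsub>A\<^esub> f y [^]\<^bsub>A\<^esub> m"
      using e by (simp only: eqw[OF x y])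
    have c2: "f x [^]\<^bsub>A\<^esub> m \<in> carrier A" using fc[OF x] G by (simp add: group.is_monoid monoid.nat_pow_closed)
    have c3: "f y [^]\<^bsub>A\<^esub> m \<in> carrier A" using fc[OF y] G by (simp add: group.is_monoid monoid.nat_pow_closed)
    have "f x [^]\<^bsub>A\<^esub> m = f y [^]\<^bsub>A\<^esub> m"
    proof -
      have wU: "weight A V E f x \<in> Units A"
        using group.Units_eq[OF G] weight_closed[OF cg bj x] by simp
      show ?thesis using monoid.Units_l_cancel[OF group.is_monoid[OF G] wU c2 c3] e2 by simp
    qed
    then have "f x = f y" by (rule pow_inj_coprime[OF G o2 cp fc[OF x] fc[OF y]])
    then show "x = y" using bj x y unfolding bij_betw_def inj_on_def by blast
  qed
  then show ?thesis using bj by blast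
qed

lemma good_J:
  assumes cg: "comm_group A" and da: "distance_antimagic A V E" and dv: "group_exponent A dvd m"
    and o2: "order A \<ge> 2"
  shows "\<exists>f. bij_betw f V (carrier A) \<and> inj_on (\<lambda>v. weight A V E f v \<otimes>\<^bsub>A\<^esub> f v [^]\<^bsub>A\<^esub> m) V"
proof -
  obtain f where f: "distance_antimagic_labelling A V E f" using da by (auto simp: distance_antimagic_def)
  have bj: "bij_betw f V (carrier A)" and iw: "inj_on (weight A V E f) V"
    using f by (auto simp: distance_antimagic_labelling_def)
  have G: "group A" using cg comm_group.axioms(2) by blast
  have M: "monoid A" using G group.is_monoid by blast
  have fc: "\<And>v. v \<in> V \<Longrightarrow> f v \<in> carrier A" using bj by (auto simp: bij_betw_def)
  have ex: "0 < order A \<and> (\<forall>x\<in>carrier A. x [^]\<^bsub>A\<^esub> order A = \<one>\<^bsub>A\<^esub>)"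
    using o2 group.pow_order_eq_1[OF G] by auto
  have e1: "\<forall>x\<in>carrier A. x [^]\<^bsub>A\<^esub> group_exponent A = \<one>\<^bsub>A\<^esub>"
    unfolding group_exponent_def using LeastI[of "\<lambda>m. 0 < m \<and> (\<forall>x\<in>carrier A. x [^]\<^bsub>A\<^esub> m = \<one>\<^bsub>A\<^esub>)", OF ex] by blast
  obtain q where q: "m = group_exponent A * q" using dv by blast
  have pm: "x [^]\<^bsub>A\<^esub> m = \<one>\<^bsub>A\<^esub>" if "x \<in> carrier A" for x
  proof -
    have "x [^]\<^bsub>A\<^esub> m = (x [^]\<^bsub>A\<^esub> group_exponent A) [^]\<^bsub>A\<^esub> q"
      unfolding q using monoid.nat_pow_pow[OF M that] by metis
    also have "\<dots> = \<one>\<^bsub>A\<^esub>" using e1 that monoid.nat_pow_one[OF M] by simp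
    finally show ?thesis .
  qed
  have "inj_on (\<lambda>v. weight A V E f v \<otimes>\<^bsub>A\<^esub> f v [^]\<^bsub>A\<^esub> m) V"
  proof (rule inj_on_cong[THEN iffD2, OF _ iw])
    fix v assume v: "v \<in> V"
    show "weight A V E f v \<otimes>\<^bsub>A\<^esub> f v [^]\<^bsub>A\<^esub> m = weight A V E f v"
      using pm[OF fc[OF v]] weight_closed[OF cg bj v] M by (simp add: monoid.r_one)
  qed
  then show ?thesis using bj by blast
qed

lemma good_L:
  assumes cg: "comm_group A" and bl: "balanced_labelling A V E rj f" and cp: "coprime (rj + m) (order A)"
    and o2: "order A \<ge> 2"
  shows "\<exists>f. bij_betw f V (carrier A) \<and> inj_on (\<lambda>v. weight A V E f v \<otimes>\<^bsub>A\<^esub> f v [^]\<^bsub>A\<^esub> m) V"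
proof -
  have bj: "bij_betw f V (carrier A)" and w: "\<And>x. x \<in> V \<Longrightarrow> weight A V E f x = f x [^]\<^bsub>A\<^esub> rj"
    using bl by (auto simp: balanced_labelling_def)
  have G: "group A" using cg comm_group.axioms(2) by blast
  have M: "monoid A" using G group.is_monoid by blast
  have fc: "\<And>v. v \<in> V \<Longrightarrow> f v \<in> carrier A" using bj by (auto simp: bij_betw_def)
  have eq: "weight A V E f v \<otimes>\<^bsub>A\<^esub> f v [^]\<^bsub>A\<^esub> m = f v [^]\<^bsub>A\<^esub> (rj + m)" if "v \<in> V" for v
    using w[OF that] fc[OF that] M by (simp add: monoid.nat_pow_mult)
  have "inj_on (\<lambda>v. weight A V E f v \<otimes>\<^bsub>A\<^esub> f v [^]\<^bsub>A\<^esub> m) V"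
  proof (rule inj_onI)
    fix x y assume x: "x \<in> V" and y: "y \<in> V"
      and e: "weight A V E f x \<otimes>\<^bsub>A\<^esub> f x [^]\<^bsub>A\<^esub> m = weight A V E f y \<otimes>\<^bsub>A\<^esub> f y [^]\<^bsub>A\<^esub> m"
    then have "f x [^]\<^bsub>A\<^esub> (rj + m) = f y [^]\<^bsub>A\<^esub> (rj + m)" using eq by simp
    then have "f x = f y" by (rule pow_inj_coprime[OF G o2 cp fc[OF x] fc[OF y]])
    then show "x = y" using bj x y unfolding bij_betw_def inj_on_def by blast
  qed
  then show ?thesis using bj by blast
qed

theorem mainTheorem7:
  fixes k :: nat
    and V :: "nat \<Rightarrow> 'a set" and E :: "nat \<Rightarrow> 'a \<Rightarrow> 'a \<Rightarrow> bool"
    and A :: "nat \<Rightarrow> ('g, 'c) monoid_scheme"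
    and rr n :: "nat \<Rightarrow> nat"
    and I J L :: "nat set"
  defines "r \<equiv> (\<Sum>i\<in>{1..k}. rr i)"
  assumes graphs: "\<And>i. i \<in> {1..k} \<Longrightarrow> simple_graph (V i) (E i)"
    and reg: "\<And>i. i \<in> {1..k} \<Longrightarrow> regular (V i) (E i) (rr i)"
    and nv: "\<And>i. i \<in> {1..k} \<Longrightarrow> card (V i) = n i \<and> n i \<ge> 2"
    and grp: "\<And>i. i \<in> {1..k} \<Longrightarrow> comm_group (A i) \<and> order (A i) = n i"
    and part: "I \<union> J \<union> L = {1..k}" "I \<inter> J = {}" "I \<inter> L = {}" "J \<inter> L = {}"
    and cI: "\<And>i. i \<in> I \<Longrightarrow> distance_magic (A i) (V i) (E i) \<and> coprime (r - rr i) (n i)"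
    and cJ: "\<And>j. j \<in> J \<Longrightarrow> distance_antimagic (A j) (V j) (E j) \<and>
                               group_exponent (A j) dvd (r - rr j)"
    and cL: "\<And>l. l \<in> L \<Longrightarrow> (\<exists>f. balanced_labelling (A l) (V l) (E l) (rr l) f) \<and>
                               coprime r (n l)"
  shows "distance_antimagic (product_group {1..k} A) (cart_V {1..k} V) (cart_E {1..k} E)"
proof -
  let ?K = "{1..k}"
  have finK: "finite ?K" by simp
  have rK: "sum rr ?K = r" by (simp add: r_def)
  have cg: "\<And>i. i \<in> ?K \<Longrightarrow> comm_group (A i)" using grp by blast
  have ord: "\<And>i. i \<in> ?K \<Longrightarrow> order (A i) = n i" using grp by blast
  have n2: "\<And>i. i \<in> ?K \<Longrightarrow> order (A i) \<ge> 2" using grp nv by metis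
  have rle: "\<And>i. i \<in> ?K \<Longrightarrow> rr i \<le> r" unfolding r_def by (rule member_le_sum) auto
  have good: "\<forall>j\<in>?K. \<exists>f. bij_betw f (V j) (carrier (A j)) \<and>
      inj_on (\<lambda>v. weight (A j) (V j) (E j) f v \<otimes>\<^bsub>A j\<^esub> f v [^]\<^bsub>A j\<^esub> (r - rr j)) (V j)"
  proof
    fix j assume j: "j \<in> ?K"
    then have "j \<in> I \<or> j \<in> J \<or> j \<in> L" using part(1) by blast
    then show "\<exists>f. bij_betw f (V j) (carrier (A j)) \<and>
      inj_on (\<lambda>v. weight (A j) (V j) (E j) f v \<otimes>\<^bsub>A j\<^esub> f v [^]\<^bsub>A j\<^esub> (r - rr j)) (V j)"
    proof (elim disjE)
      assume jI: "j \<in> I"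
      show ?thesis
        using good_I[OF cg[OF j] _ _ n2[OF j], of "V j" "E j" "r - rr j"] cI[OF jI] ord[OF j] by simp
    next
      assume jJ: "j \<in> J"
      show ?thesis
        using good_J[OF cg[OF j] _ _ n2[OF j], of "V j" "E j" "r - rr j"] cJ[OF jJ] by simp
    next
      assume jL: "j \<in> L"
      obtain f where f: "balanced_labelling (A j) (V j) (E j) (rr j) f" using cL[OF jL] by blast
      have "coprime (rr j + (r - rr j)) (order (A j))" using cL[OF jL] ord[OF j] rle[OF j] by simp
      then show ?thesis using good_L[OF cg[OF j] f _ n2[OF j]] by simp
    qed
  qed
  then obtain fl where fl: "\<And>j. j \<in> ?K \<Longrightarrow> bij_betw (fl j) (V j) (carrier (A j)) \<and>
      inj_on (\<lambda>v. weight (A j) (V j) (E j) (fl j) v \<otimes>\<^bsub>A j\<^esub> fl j v [^]\<^bsub>A j\<^esub> (r - rr j)) (V j)"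
    by (metis bchoice)
  have bj: "\<And>j. j \<in> ?K \<Longrightarrow> bij_betw (fl j) (V j) (carrier (A j))" using fl by blast
  define F where "F = (\<lambda>y. \<lambda>i\<in>?K. fl i (y i))"
  have injF: "inj_on F (PiE ?K V)"
  proof (rule inj_onI)
    fix x y assume x: "x \<in> PiE ?K V" and y: "y \<in> PiE ?K V" and e: "F x = F y"
    show "x = y"
    proof (rule PiE_ext[OF x y])
      fix j assume j: "j \<in> ?K"
      have "fl j (x j) = fl j (y j)" using fun_cong[OF e, of j] j by (simp add: F_def)
      moreover have "x j \<in> V j" "y j \<in> V j" using x y j by (auto simp: PiE_iff)
      ultimately show "x j = y j" using bj[OF j] by (auto simp: bij_betw_def inj_on_def)
    qed
  qed
  have imF: "F ` PiE ?K V = PiE ?K (\<lambda>i. carrier (A i))"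
  proof (intro Set.set_eqI iffI)
    fix z assume "z \<in> F ` PiE ?K V"
    then obtain x where x: "x \<in> PiE ?K V" and z: "z = F x" by blast
    show "z \<in> PiE ?K (\<lambda>i. carrier (A i))"
      using x bj unfolding z F_def by (fastforce simp: PiE_iff bij_betw_def)
  next
    fix z assume z: "z \<in> PiE ?K (\<lambda>i. carrier (A i))"
    define x where "x = (\<lambda>j\<in>?K. inv_into (V j) (fl j) (z j))"
    have zim: "z j \<in> fl j ` V j" if "j \<in> ?K" for j
      using z that bj[OF that] by (auto simp: PiE_iff bij_betw_def)
    have "x \<in> PiE ?K V" using zim by (auto simp: x_def PiE_iff inv_into_into)
    moreover have "F x = z"
    proof (rule ext)
      fix j show "F x j = z j"
      proof (cases "j \<in> ?K")
        case True then show ?thesis using zim[OF True] by (simp add: F_def x_def f_inv_into_f)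
      next
        case False then show ?thesis using z extensional_arb[of z ?K j] by (auto simp: F_def PiE_iff)
      qed
    qed
    ultimately show "z \<in> F ` PiE ?K V" by blast
  qed
  have W: "weight (product_group ?K A) (cart_V ?K V) (cart_E ?K E) F x j
       = weight (A j) (V j) (E j) (fl j) (x j) \<otimes>\<^bsub>A j\<^esub> fl j (x j) [^]\<^bsub>A j\<^esub> (r - rr j)"
    if "x \<in> PiE ?K V" "j \<in> ?K" for x j
    unfolding F_def rK[symmetric]
    by (rule weight_cart[OF finK that(2) graphs reg cg bj that(1)])
  have injW: "inj_on (weight (product_group ?K A) (cart_V ?K V) (cart_E ?K E) F) (cart_V ?K V)"
  proof (rule inj_onI)
    fix x y assume x: "x \<in> cart_V ?K V" and y: "y \<in> cart_V ?K V"
      and e: "weight (product_group ?K A) (cart_V ?K V) (cart_E ?K E) F x = weight (product_group ?K A) (cart_V ?K V) (cart_E ?K E) F y"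
    have x': "x \<in> PiE ?K V" and y': "y \<in> PiE ?K V" using x y by (simp_all add: cart_V_def)
    show "x = y"
    proof (rule PiE_ext[OF x' y'])
      fix j assume j: "j \<in> ?K"
      have "weight (A j) (V j) (E j) (fl j) (x j) \<otimes>\<^bsub>A j\<^esub> fl j (x j) [^]\<^bsub>A j\<^esub> (r - rr j)
          = weight (A j) (V j) (E j) (fl j) (y j) \<otimes>\<^bsub>A j\<^esub> fl j (y j) [^]\<^bsub>A j\<^esub> (r - rr j)"
        using W[OF x' j] W[OF y' j] fun_cong[OF e, of j] by simp
      moreover have "x j \<in> V j" "y j \<in> V j" using x' y' j by (auto simp: PiE_iff)
      ultimately show "x j = y j" using fl[OF j] unfolding inj_on_def by blast
    qed
  qed
  show ?thesis
    unfolding distance_antimagic_def distance_antimagic_labelling_def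
    using injF imF injW by (intro exI[of _ F] conjI) (simp_all add: bij_betw_def cart_V_def)
qed

end
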